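(* Let $m \in \mathbb N$ and let $\phi \colon \mathcal H_2^0 \to \mathcal H_m$ be a map. Then the following are equivalent: (i) $\phi$ is linear and $\phi(\mathcal{IH}_2^0) \subset \mathcal H_m \cap \mathcal U_m$; (ii) there exist $p, q \in \mathbb N \cup \{0\}$ and $U \in \mathcal U_m$ such that $m = 2(p+q)$ and $\phi(A) = U\left((A \otimes I_p) \oplus (-A \otimes I_q)\right)U^\ast$ for all $A \in \mathcal H_2^0$.
   Context: $\mathcal H_m$ is the real vector space of $m\times m$ complex hermitian matrices, $\mathcal U_m$ the set of $m \times m$ unitary matrices, $\mathcal H_2^0$ the trace-zero matrices in $\mathcal H_2$, $\mathcal{IH}_2^0 = \mathcal H_2^0 \cap \mathcal U_2$, $\otimes$ the Kronecker product and $\oplus$ the block-diagonal direct sum (with $0\times0$ blocks omitted). *)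

theory Defs
  imports "Jordan_Normal_Form.Matrix"
begin

definition adj :: "complex mat \<Rightarrow> complex mat" where
  "adj A = mat (dim_col A) (dim_row A) (\<lambda>(i,j). cnj (A $$ (j,i)))"

definition mtrace :: "complex mat \<Rightarrow> complex" where
  "mtrace A = (\<Sum>i<dim_row A. A $$ (i,i))"

definition herm :: "nat \<Rightarrow> complex mat set" where
  "herm m = {A. A \<in> carrier_mat m m \<and> adj A = A}"

definition unitary :: "nat \<Rightarrow> complex mat set" where
  "unitary m = {U. U \<in> carrier_mat m m \<and> adj U * U = 1\<^sub>m m \<and> U * adj U = 1\<^sub>m m}"

definition herm20 :: "complex mat set" where
  "herm20 = {A \<in> herm 2. mtrace A = 0}"

definition iherm20 :: "complex mat set" where
  "iherm20 = herm20 \<inter> unitary 2"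

definition kron :: "complex mat \<Rightarrow> complex mat \<Rightarrow> complex mat" where
  "kron A B = mat (dim_row A * dim_row B) (dim_col A * dim_col B)
     (\<lambda>(i,j). A $$ (i div dim_row B, j div dim_col B) * B $$ (i mod dim_row B, j mod dim_col B))"

(* block-diagonal direct sum; 0x0 blocks contribute nothing *)
definition dsum :: "complex mat \<Rightarrow> complex mat \<Rightarrow> complex mat" where
  "dsum A B = four_block_mat A (0\<^sub>m (dim_row A) (dim_col B)) (0\<^sub>m (dim_row B) (dim_col A)) B"

definition real_linear_on :: "complex mat set \<Rightarrow> (complex mat \<Rightarrow> complex mat) \<Rightarrow> bool" where
  "real_linear_on S \<phi> \<longleftrightarrow>
     (\<forall>A\<in>S. \<forall>B\<in>S. \<forall>a b::real.
        \<phi> (complex_of_real a \<cdot>\<^sub>m A + complex_of_real b \<cdot>\<^sub>m B)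
          = complex_of_real a \<cdot>\<^sub>m \<phi> A + complex_of_real b \<cdot>\<^sub>m \<phi> B)"

end

theory Submission
  imports Defs
begin

lemma dassoc: "dim_col (A::complex mat) = dim_row B \<Longrightarrow> dim_col B = dim_row C \<Longrightarrow> A * B * C = A * (B * C)"
  by (rule assoc_mult_mat[of A "dim_row A" "dim_col A" B "dim_col B" C "dim_col C"]) auto

lemma daddL: "dim_row (A::complex mat) = dim_row B \<Longrightarrow> dim_col A = dim_col B \<Longrightarrow> dim_col A = dim_row C \<Longrightarrow> (A + B) * C = A * C + B * C"
  by (rule add_mult_distrib_mat[of A "dim_row A" "dim_col A" B C "dim_col C"]) auto

lemma daddR: "dim_row (B::complex mat) = dim_row C \<Longrightarrow> dim_col B = dim_col C \<Longrightarrow> dim_col A = dim_row B \<Longrightarrow> A * (B + C) = A * B + A * C"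
  by (rule mult_add_distrib_mat[of A "dim_row A" "dim_col A" B "dim_col B" C]) auto

lemma dminusL: "dim_row (A::complex mat) = dim_row B \<Longrightarrow> dim_col A = dim_col B \<Longrightarrow> dim_col A = dim_row C \<Longrightarrow> (A - B) * C = A * C - B * C"
  by (rule minus_mult_distrib_mat[of A "dim_row A" "dim_col A" B C "dim_col C"]) auto

lemma dminusR: "dim_row (B::complex mat) = dim_row C \<Longrightarrow> dim_col B = dim_col C \<Longrightarrow> dim_col A = dim_row B \<Longrightarrow> A * (B - C) = A * B - A * C"
  by (rule mult_minus_distrib_mat[of A "dim_row A" "dim_col A" B "dim_col B" C]) auto

lemma dsmultL: "dim_col (A::complex mat) = dim_row B \<Longrightarrow> (c \<cdot>\<^sub>m A) * B = c \<cdot>\<^sub>m (A * B)"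
  by (rule mult_smult_assoc_mat[of A "dim_row A" "dim_col A" B "dim_col B"]) auto

lemma dsmultR: "dim_col (A::complex mat) = dim_row B \<Longrightarrow> A * (c \<cdot>\<^sub>m B) = c \<cdot>\<^sub>m (A * B)"
  by (rule mult_smult_distrib[of A "dim_row A" "dim_col A" B "dim_col B"]) auto

lemmas dsimps = dassoc daddL daddR dminusL dminusR dsmultL dsmultR

lemma smult_smult_mat: "(a::'a::semigroup_mult) \<cdot>\<^sub>m (b \<cdot>\<^sub>m A) = (a * b) \<cdot>\<^sub>m A"
  by (rule eq_matI) (auto simp: mult.assoc)

section \<open>Adjoint\<close>

lemma adj_dim[simp]: "dim_row (adj A) = dim_col A" "dim_col (adj A) = dim_row A"
  by (auto simp: adj_def)

lemma adj_index[simp]: "i < dim_col A \<Longrightarrow> j < dim_row A \<Longrightarrow> adj A $$ (i,j) = cnj (A $$ (j,i))"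
  by (auto simp: adj_def)

lemma adj_carrier[simp]: "A \<in> carrier_mat n k \<Longrightarrow> adj A \<in> carrier_mat k n"
  using carrier_matD[of A n k] by (intro carrier_matI) simp_all

lemma adj_adj[simp]: "adj (adj A) = A"
  by (rule eq_matI) simp_all

lemma adj_mult: "dim_col (A::complex mat) = dim_row B \<Longrightarrow> adj (A * B) = adj B * adj A"
  apply (rule eq_matI)
    apply (simp_all add: scalar_prod_def cnj_sum)
  apply (rule sum.cong)
   apply (auto simp: mult.commute)
  done

lemma adj_add: "dim_row A = dim_row B \<Longrightarrow> dim_col A = dim_col B \<Longrightarrow> adj (A + B) = adj A + adj B"
  by (rule eq_matI) simp_all

lemma adj_minus: "dim_row A = dim_row B \<Longrightarrow> dim_col A = dim_col B \<Longrightarrow> adj (A - B) = adj A - adj B"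
  by (rule eq_matI) simp_all

lemma adj_smult[simp]: "adj (c \<cdot>\<^sub>m A) = cnj c \<cdot>\<^sub>m adj A"
  by (rule eq_matI) simp_all

lemma adj_uminus[simp]: "adj (- A) = - adj A"
  by (rule eq_matI) simp_all

lemma adj_one[simp]: "adj (1\<^sub>m n) = 1\<^sub>m n"
  by (rule eq_matI) simp_all

lemma adj_zero[simp]: "adj (0\<^sub>m n k) = 0\<^sub>m k n"
  by (rule eq_matI) simp_all

section \<open>Trace\<close>

lemma mtrace_mult: assumes "A \<in> carrier_mat n k" "B \<in> carrier_mat k n"
  shows "mtrace (A * B) = (\<Sum>i<n. \<Sum>j<k. A $$ (i,j) * B $$ (j,i))"
proof -
  have "mtrace (A * B) = (\<Sum>i<n. (A * B) $$ (i,i))" using assms by (simp add: mtrace_def)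
  also have "\<dots> = (\<Sum>i<n. \<Sum>j<k. A $$ (i,j) * B $$ (j,i))"
  proof (rule sum.cong[OF refl])
    fix i assume i: "i \<in> {..<n}"
    have "(A * B) $$ (i,i) = (\<Sum>j\<in>{0..<k}. row A i $ j * col B i $ j)"
      using assms i by (simp add: scalar_prod_def)
    also have "\<dots> = (\<Sum>j<k. A $$ (i,j) * B $$ (j,i))"
      using assms i by (simp add: atLeast0LessThan)
    finally show "(A * B) $$ (i,i) = (\<Sum>j<k. A $$ (i,j) * B $$ (j,i))" .
  qed
  finally show ?thesis .
qed

lemma mtrace_comm: assumes "A \<in> carrier_mat n k" "B \<in> carrier_mat k n"
  shows "mtrace (A * B) = mtrace (B * A)"
  unfolding mtrace_mult[OF assms] mtrace_mult[OF assms(2,1)]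
  by (subst sum.swap) (simp add: mult.commute)

lemma mtrace_one[simp]: "mtrace (1\<^sub>m n) = of_nat n"
  by (simp add: mtrace_def)

section \<open>Column concatenation\<close>

definition cc :: "complex mat \<Rightarrow> complex mat \<Rightarrow> complex mat" where
  "cc X Y = four_block_mat X Y (0\<^sub>m 0 (dim_col X)) (0\<^sub>m 0 (dim_col Y))"

lemma cc_dim[simp]: "dim_row (cc X Y) = dim_row X" "dim_col (cc X Y) = dim_col X + dim_col Y"
  by (auto simp: cc_def)

lemma cc_carrier[simp]: "X \<in> carrier_mat m a \<Longrightarrow> Y \<in> carrier_mat m b \<Longrightarrow> cc X Y \<in> carrier_mat m (a + b)"
  using carrier_matD[of X m a] carrier_matD[of Y m b] by (intro carrier_matI) simp_all

lemma zero_row_eq: "A \<in> carrier_mat 0 n \<Longrightarrow> A = 0\<^sub>m 0 n"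
  by (rule eq_matI) simp_all

lemma fb_trivial: "A \<in> carrier_mat m k \<Longrightarrow> B \<in> carrier_mat m 0 \<Longrightarrow> C \<in> carrier_mat 0 k \<Longrightarrow> D \<in> carrier_mat 0 0
  \<Longrightarrow> four_block_mat A B C D = A"
  by (rule eq_matI) simp_all

lemma mult_cc: assumes "M \<in> carrier_mat n m" "X \<in> carrier_mat m a" "Y \<in> carrier_mat m b"
  shows "M * cc X Y = cc (M * X) (M * Y)"
proof -
  have "M = four_block_mat M (0\<^sub>m n 0) (0\<^sub>m 0 m) (0\<^sub>m 0 0)"
    using assms by (simp add: fb_trivial)
  then have "M * cc X Y = four_block_mat M (0\<^sub>m n 0) (0\<^sub>m 0 m) (0\<^sub>m 0 0) * four_block_mat X Y (0\<^sub>m 0 a) (0\<^sub>m 0 b)"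
    using assms by (simp add: cc_def)
  also have "\<dots> = four_block_mat (M * X + 0\<^sub>m n 0 * 0\<^sub>m 0 a) (M * Y + 0\<^sub>m n 0 * 0\<^sub>m 0 b)
       (0\<^sub>m 0 m * X + 0\<^sub>m 0 0 * 0\<^sub>m 0 a) (0\<^sub>m 0 m * Y + 0\<^sub>m 0 0 * 0\<^sub>m 0 b)"
    by (rule mult_four_block_mat) (use assms in auto)
  also have "\<dots> = cc (M * X) (M * Y)"
    using assms unfolding cc_def
    by (intro cong_four_block_mat) (auto intro!: zero_row_eq)
  finally show ?thesis .
qed

lemma cc_mult_fb: assumes "X \<in> carrier_mat m a" "Y \<in> carrier_mat m b"
  "A \<in> carrier_mat a c" "B \<in> carrier_mat a d" "C \<in> carrier_mat b c" "D \<in> carrier_mat b d"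
  shows "cc X Y * four_block_mat A B C D = cc (X * A + Y * C) (X * B + Y * D)"
proof -
  have "cc X Y * four_block_mat A B C D = four_block_mat X Y (0\<^sub>m 0 a) (0\<^sub>m 0 b) * four_block_mat A B C D"
    using assms by (simp add: cc_def)
  also have "\<dots> = four_block_mat (X * A + Y * C) (X * B + Y * D)
       (0\<^sub>m 0 a * A + 0\<^sub>m 0 b * C) (0\<^sub>m 0 a * B + 0\<^sub>m 0 b * D)"
    by (rule mult_four_block_mat) (use assms in auto)
  also have "\<dots> = cc (X * A + Y * C) (X * B + Y * D)"
    using assms unfolding cc_def
    by (intro cong_four_block_mat) (auto intro!: zero_row_eq)
  finally show ?thesis .
qed

lemma adj_cc: assumes "X \<in> carrier_mat m a" "Y \<in> carrier_mat m b"
  shows "adj (cc X Y) = four_block_mat (adj X) (0\<^sub>m a 0) (adj Y) (0\<^sub>m b 0)"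
  using assms by (intro eq_matI) (auto simp: cc_def)

lemma adj_cc_mult_cc: assumes "X \<in> carrier_mat m a" "Y \<in> carrier_mat m b" "Z \<in> carrier_mat m c" "W \<in> carrier_mat m d"
  shows "adj (cc X Y) * cc Z W = four_block_mat (adj X * Z) (adj X * W) (adj Y * Z) (adj Y * W)"
proof -
  have "adj (cc X Y) * cc Z W = four_block_mat (adj X) (0\<^sub>m a 0) (adj Y) (0\<^sub>m b 0) * four_block_mat Z W (0\<^sub>m 0 c) (0\<^sub>m 0 d)"
    using assms unfolding adj_cc[OF assms(1,2)] by (simp add: cc_def)
  also have "\<dots> = four_block_mat (adj X * Z + 0\<^sub>m a 0 * 0\<^sub>m 0 c) (adj X * W + 0\<^sub>m a 0 * 0\<^sub>m 0 d)
     (adj Y * Z + 0\<^sub>m b 0 * 0\<^sub>m 0 c) (adj Y * W + 0\<^sub>m b 0 * 0\<^sub>m 0 d)"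
    by (rule mult_four_block_mat) (use assms in auto)
  also have "\<dots> = four_block_mat (adj X * Z) (adj X * W) (adj Y * Z) (adj Y * W)"
    using assms by (intro cong_four_block_mat) auto
  finally show ?thesis .
qed

lemma cc_mult_adj_cc: assumes "X \<in> carrier_mat m a" "Y \<in> carrier_mat m b" "Z \<in> carrier_mat n a" "W \<in> carrier_mat n b"
  shows "cc X Y * adj (cc Z W) = X * adj Z + Y * adj W"
proof -
  have "cc X Y * adj (cc Z W) = four_block_mat X Y (0\<^sub>m 0 a) (0\<^sub>m 0 b) * four_block_mat (adj Z) (0\<^sub>m a 0) (adj W) (0\<^sub>m b 0)"
    using assms unfolding adj_cc[OF assms(3,4)] by (simp add: cc_def)
  also have "\<dots> = four_block_mat (X * adj Z + Y * adj W) (X * 0\<^sub>m a 0 + Y * 0\<^sub>m b 0)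
     (0\<^sub>m 0 a * adj Z + 0\<^sub>m 0 b * adj W) (0\<^sub>m 0 a * 0\<^sub>m a 0 + 0\<^sub>m 0 b * 0\<^sub>m b 0)"
    by (rule mult_four_block_mat) (use assms in auto)
  also have "\<dots> = X * adj Z + Y * adj W"
    using assms by (intro fb_trivial) auto
  finally show ?thesis .
qed

lemma mult_entry: "A \<in> carrier_mat n k \<Longrightarrow> B \<in> carrier_mat k l \<Longrightarrow> i < n \<Longrightarrow> j < l \<Longrightarrow>
  (A * B) $$ (i,j) = (\<Sum>t<k. A $$ (i,t) * B $$ (t,j))"
  by (simp add: scalar_prod_def atLeast0LessThan)

lemma herm_idem_diag:
  assumes E: "E \<in> carrier_mat m m" and h: "adj E = E" and i: "E * E = E" and j: "j < m"
  shows "E $$ (j,j) = of_real (\<Sum>k<m. (cmod (E $$ (k,j)))^2)"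
proof -
  have "E $$ (j,j) = (E * E) $$ (j,j)" using i by simp
  also have "\<dots> = (\<Sum>k<m. E $$ (j,k) * E $$ (k,j))" by (rule mult_entry[OF E E j j])
  also have "\<dots> = (\<Sum>k<m. cnj (E $$ (k,j)) * E $$ (k,j))"
  proof (rule sum.cong[OF refl])
    fix k assume k: "k \<in> {..<m}"
    have "E $$ (j,k) = adj E $$ (j,k)" using h by simp
    also have "\<dots> = cnj (E $$ (k,j))" using E j k by simp
    finally show "E $$ (j,k) * E $$ (k,j) = cnj (E $$ (k,j)) * E $$ (k,j)" by simp
  qed
  also have "\<dots> = (\<Sum>k<m. of_real ((cmod (E $$ (k,j)))^2))"
    by (rule sum.cong[OF refl]) (use complex_norm_square in \<open>simp add: mult.commute\<close>)
  also have "\<dots> = of_real (\<Sum>k<m. (cmod (E $$ (k,j)))^2)" by simp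
  finally show ?thesis .
qed

lemma herm_idem_trace:
  assumes E: "E \<in> carrier_mat m m" and h: "adj E = E" and i: "E * E = E"
  shows "mtrace E = of_real (\<Sum>j<m. \<Sum>k<m. (cmod (E $$ (k,j)))^2)"
  using E herm_idem_diag[OF E h i] by (simp add: mtrace_def)

lemma herm_idem_zero:
  assumes E: "E \<in> carrier_mat m m" and h: "adj E = E" and i: "E * E = E" and t: "Re (mtrace E) \<le> 0"
  shows "E = 0\<^sub>m m m"
proof (rule eq_matI)
  fix k j assume k: "k < dim_row (0\<^sub>m m m)" and j: "j < dim_col (0\<^sub>m m m)"
  let ?f = "\<lambda>j. \<Sum>k<m. (cmod (E $$ (k,j)))^2"
  have "(\<Sum>j<m. ?f j) \<le> 0" using t herm_idem_trace[OF E h i] by simp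
  moreover have "\<forall>j\<in>{..<m}. 0 \<le> ?f j" by (auto intro: sum_nonneg)
  ultimately have "\<forall>j\<in>{..<m}. ?f j = 0"
    by (metis (no_types, lifting) finite_lessThan order_antisym sum_nonneg sum_nonneg_eq_0_iff)
  then have "?f j = 0" using j by simp
  then have "\<forall>k\<in>{..<m}. (cmod (E $$ (k,j)))^2 = 0"
    by (subst (asm) sum_nonneg_eq_0_iff) auto
  then show "E $$ (k,j) = 0\<^sub>m m m $$ (k,j)" using k j by simp
qed (use E in auto)

lemma exists_unit:
  assumes E: "E \<in> carrier_mat m m" and h: "adj E = E" and i: "E * E = E" and nz: "E \<noteq> 0\<^sub>m m m"
  shows "\<exists>u. u \<in> carrier_mat m 1 \<and> adj u * u = 1\<^sub>m 1 \<and> E * u = u"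
proof -
  obtain k j where kj: "k < m" "j < m" "E $$ (k,j) \<noteq> 0"
    using nz E by (metis carrier_matD(1,2) eq_matI index_zero_mat(1,2,3))
  define s where "s = (\<Sum>k<m. (cmod (E $$ (k,j)))^2)"
  have "(cmod (E $$ (k,j)))^2 \<le> s" unfolding s_def
    by (rule member_le_sum) (use kj in auto)
  moreover have "(cmod (E $$ (k,j)))^2 > 0" using kj by simp
  ultimately have s0: "s > 0" by linarith
  define c where "c = complex_of_real (sqrt s)"
  have c0: "c \<noteq> 0" using s0 by (simp add: c_def)
  have cc2: "cnj c * c = of_real s" using s0 by (simp add: c_def flip: of_real_mult)
  define u where "u = mat m 1 (\<lambda>(i,_). E $$ (i,j) / c)"
  have u: "u \<in> carrier_mat m 1" by (simp add: u_def)
  have "adj u * u = 1\<^sub>m 1"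
  proof (rule eq_matI)
    fix a b assume a: "a < dim_row (1\<^sub>m 1)" and b: "b < dim_col (1\<^sub>m 1)"
    then have ab: "a = 0" "b = 0" by auto
    have "(adj u * u) $$ (0,0) = (\<Sum>t<m. adj u $$ (0,t) * u $$ (t,0))"
      by (rule mult_entry[OF adj_carrier[OF u] u]) auto
    also have "\<dots> = (\<Sum>t<m. cnj (E $$ (t,j) / c) * (E $$ (t,j) / c))"
      using u by (simp add: u_def)
    also have "\<dots> = (\<Sum>t<m. of_real ((cmod (E $$ (t,j)))^2)) / (cnj c * c)"
      by (simp add: sum_divide_distrib) (use complex_norm_square in \<open>simp add: mult.commute\<close>)
    also have "\<dots> = of_real s / of_real s" by (simp only: cc2 s_def of_real_sum)
    also have "\<dots> = 1" using s0 by simp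
    finally show "(adj u * u) $$ (a,b) = 1\<^sub>m 1 $$ (a,b)" using ab by simp
  qed (use u in auto)
  moreover have "E * u = u"
  proof (rule eq_matI)
    fix a b assume a: "a < dim_row u" and b: "b < dim_col u"
    then have ab: "a < m" "b = 0" using u by auto
    have "(E * u) $$ (a,b) = (\<Sum>t<m. E $$ (a,t) * u $$ (t,b))"
      by (rule mult_entry[OF E u]) (use ab in auto)
    also have "\<dots> = (\<Sum>t<m. E $$ (a,t) * (E $$ (t,j) / c))"
      using ab by (simp add: u_def)
    also have "\<dots> = (E * E) $$ (a,j) / c"
      by (subst mult_entry[OF E E]) (use ab kj in \<open>auto simp: sum_divide_distrib\<close>)
    also have "\<dots> = u $$ (a,b)" using i ab by (simp add: u_def)
    finally show "(E * u) $$ (a,b) = u $$ (a,b)" .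
  qed (use u E in auto)
  ultimately show ?thesis using u by blast
qed

lemma mtrace_minus: "A \<in> carrier_mat n n \<Longrightarrow> B \<in> carrier_mat n n \<Longrightarrow> mtrace (A - B) = mtrace A - mtrace B"
  by (simp add: mtrace_def sum_subtractf)

lemma proj_step:
  assumes E: "E \<in> carrier_mat m m" and h: "adj E = E" and i: "E * E = E"
    and u: "u \<in> carrier_mat m 1" and uu: "adj u * u = 1\<^sub>m 1" and Eu: "E * u = u"
    and IH: "\<And>E'. E' \<in> carrier_mat m m \<Longrightarrow> adj E' = E' \<Longrightarrow> E' * E' = E' \<Longrightarrow> mtrace E' = mtrace E - 1
       \<Longrightarrow> \<exists>p V. V \<in> carrier_mat m p \<and> adj V * V = 1\<^sub>m p \<and> V * adj V = E'"
  shows "\<exists>p V. V \<in> carrier_mat m p \<and> adj V * V = 1\<^sub>m p \<and> V * adj V = E"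
proof -
  define W where "W = u * adj u"
  have W: "W \<in> carrier_mat m m" using u by (simp add: W_def)
  have uE: "adj u * E = adj u"
  proof -
    have "adj u * E = adj (E * u)" using E u h by (simp add: adj_mult)
    then show ?thesis using Eu by simp
  qed
  have EW: "E * W = W" unfolding W_def using E u Eu by (simp flip: dassoc)
  have WE: "W * E = W" unfolding W_def using E u uE by (simp add: dassoc)
  have WW: "W * W = W" unfolding W_def using u uu
    by (simp add: dassoc) (simp flip: dassoc)
  have hW: "adj W = W" unfolding W_def using u by (simp add: adj_mult)
  define E' where "E' = E - W"
  have E': "E' \<in> carrier_mat m m" using W unfolding E'_def by (rule minus_carrier_mat)
  have hE': "adj E' = E'" unfolding E'_def using E W h hW by (simp add: adj_minus)
  have iE': "E' * E' = E'"
  proof -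
    have "E' * E' = E * E - W * E - (E * W - W * W)" unfolding E'_def using E W
      by (simp add: dminusL dminusR)
    also have "\<dots> = E - W - (W - W)" using i EW WE WW by simp
    also have "\<dots> = E'" unfolding E'_def by (rule eq_matI) (use E W in auto)
    finally show ?thesis .
  qed
  have trW: "mtrace W = 1" unfolding W_def
    using mtrace_comm[OF u adj_carrier[OF u]] uu by simp
  have tE': "mtrace E' = mtrace E - 1" unfolding E'_def using mtrace_minus[OF E W] trW by simp
  obtain p V' where V': "V' \<in> carrier_mat m p" and VV': "adj V' * V' = 1\<^sub>m p" and VE': "V' * adj V' = E'"
    using IH[OF E' hE' iE' tE'] by blast
  have E'V': "E' * V' = V'"
  proof -
    have "E' * V' = V' * (adj V' * V')" using V' VE'[symmetric] by (simp add: dassoc)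
    then show ?thesis using VV' V' by simp
  qed
  have V'E': "adj V' * E' = adj V'"
  proof -
    have "adj V' * E' = adj (E' * V')" using E' V' hE' by (simp add: adj_mult)
    then show ?thesis using E'V' by simp
  qed
  have E'u: "E' * u = 0\<^sub>m m 1"
  proof -
    have "E' * u = E * u - W * u" unfolding E'_def using E W u by (simp add: dminusL)
    also have "W * u = u" unfolding W_def using u uu by (simp add: dassoc)
    finally show ?thesis using Eu by (intro eq_matI) (use u in auto)
  qed
  have Vu: "adj V' * u = 0\<^sub>m p 1"
  proof -
    have "adj V' * u = adj V' * (E' * u)" using V'E' V' E' u by (simp flip: dassoc)
    then show ?thesis using E'u V' by simp
  qed
  have uV: "adj u * V' = 0\<^sub>m 1 p"
  proof -
    have "adj u * V' = adj (adj V' * u)" using V' u by (simp add: adj_mult)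
    then show ?thesis using Vu by simp
  qed
  define V where "V = cc V' u"
  have V: "V \<in> carrier_mat m (p + 1)" unfolding V_def using V' u by (rule cc_carrier)
  have "adj V * V = four_block_mat (1\<^sub>m p) (0\<^sub>m p 1) (0\<^sub>m 1 p) (1\<^sub>m 1)"
    unfolding V_def adj_cc_mult_cc[OF V' u V' u] VV' Vu uV uu ..
  also have "\<dots> = 1\<^sub>m (p + 1)" by simp
  finally have 1: "adj V * V = 1\<^sub>m (p + 1)" .
  have "V * adj V = E' + W" unfolding V_def cc_mult_adj_cc[OF V' u V' u] VE' W_def ..
  also have "\<dots> = E" unfolding E'_def by (rule eq_matI) (use E W in auto)
  finally show ?thesis using 1 V by blast
qed

lemma proj_decomp_aux:
  "\<forall>E. E \<in> carrier_mat m m \<and> adj E = E \<and> E * E = E \<and> Re (mtrace E) \<le> real k \<longrightarrow>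
     (\<exists>p V. V \<in> carrier_mat m p \<and> adj V * V = 1\<^sub>m p \<and> V * adj V = E)"
proof (induction k)
  case 0
  show ?case
  proof (intro allI impI)
    fix E assume a: "E \<in> carrier_mat m m \<and> adj E = E \<and> E * E = E \<and> Re (mtrace E) \<le> real 0"
    then have "E = 0\<^sub>m m m" using herm_idem_zero[of E m] by auto
    moreover have "(0\<^sub>m m 0 :: complex mat) \<in> carrier_mat m 0" by simp
    moreover have "adj (0\<^sub>m m 0) * 0\<^sub>m m 0 = (1\<^sub>m 0 :: complex mat)" by (rule eq_matI) auto
    moreover have "0\<^sub>m m 0 * adj (0\<^sub>m m 0) = (0\<^sub>m m m :: complex mat)" by simp
    ultimately show "\<exists>p V. V \<in> carrier_mat m p \<and> adj V * V = 1\<^sub>m p \<and> V * adj V = E" by blast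
  qed
next
  case (Suc k)
  show ?case
  proof (intro allI impI)
    fix E assume a: "E \<in> carrier_mat m m \<and> adj E = E \<and> E * E = E \<and> Re (mtrace E) \<le> real (Suc k)"
    then have E: "E \<in> carrier_mat m m" and h: "adj E = E" and i: "E * E = E" by auto
    show "\<exists>p V. V \<in> carrier_mat m p \<and> adj V * V = 1\<^sub>m p \<and> V * adj V = E"
    proof (cases "E = 0\<^sub>m m m")
      case True
      moreover have "(0\<^sub>m m 0 :: complex mat) \<in> carrier_mat m 0" by simp
      moreover have "adj (0\<^sub>m m 0) * 0\<^sub>m m 0 = (1\<^sub>m 0 :: complex mat)" by (rule eq_matI) auto
      moreover have "0\<^sub>m m 0 * adj (0\<^sub>m m 0) = (0\<^sub>m m m :: complex mat)" by simp
      ultimately show ?thesis by blast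
    next
      case False
      obtain u where u: "u \<in> carrier_mat m 1" "adj u * u = 1\<^sub>m 1" "E * u = u"
        using exists_unit[OF E h i False] by blast
      show ?thesis
      proof (rule proj_step[OF E h i u])
        fix E' assume "E' \<in> carrier_mat m m" "adj E' = E'" "E' * E' = E'" "mtrace E' = mtrace E - 1"
        moreover then have "Re (mtrace E') \<le> real k" using a by simp
        ultimately show "\<exists>p V. V \<in> carrier_mat m p \<and> adj V * V = 1\<^sub>m p \<and> V * adj V = E'"
          using Suc.IH by blast
      qed
    qed
  qed
qed

lemma proj_decomp:
  assumes "E \<in> carrier_mat m m" "adj E = E" "E * E = E"
  shows "\<exists>p V. V \<in> carrier_mat m p \<and> adj V * V = 1\<^sub>m p \<and> V * adj V = E"
proof -
  have "Re (mtrace E) \<le> real (nat \<lceil>Re (mtrace E)\<rceil>)" by linarith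
  then show ?thesis using proj_decomp_aux[of m "nat \<lceil>Re (mtrace E)\<rceil>"] assms by blast
qed

definition pc :: "real \<Rightarrow> real \<Rightarrow> real \<Rightarrow> complex mat" where
  "pc x y z = mat 2 2 (\<lambda>(i,j). if i = 0 \<and> j = 0 then of_real z else if i = 0 then of_real x - \<i> * of_real y
     else if j = 0 then of_real x + \<i> * of_real y else - of_real z)"

lemma pc_carrier[simp]: "pc x y z \<in> carrier_mat 2 2" by (simp add: pc_def)
lemma pc_dim[simp]: "dim_row (pc x y z) = 2" "dim_col (pc x y z) = 2" by (simp_all add: pc_def)

lemma pc_index[simp]:
  "pc x y z $$ (0,0) = of_real z" "pc x y z $$ (0,1) = of_real x - \<i> * of_real y"
  "pc x y z $$ (1,0) = of_real x + \<i> * of_real y" "pc x y z $$ (1,1) = - of_real z"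
  by (simp_all add: pc_def)

lemma pc_index'[simp]:
  "pc x y z $$ (0,Suc 0) = of_real x - \<i> * of_real y"
  "pc x y z $$ (Suc 0,0) = of_real x + \<i> * of_real y" "pc x y z $$ (Suc 0,Suc 0) = - of_real z"
  by (simp_all add: pc_def)

lemma smult_one_mat[simp]: "(1::complex) \<cdot>\<^sub>m A = A" by (rule eq_matI) simp_all

lemma less2: "(i::nat) < 2 \<longleftrightarrow> i = 0 \<or> i = 1" by auto

lemma eq_mat2I: "A \<in> carrier_mat 2 2 \<Longrightarrow> B \<in> carrier_mat 2 2 \<Longrightarrow> A $$ (0,0) = B $$ (0,0) \<Longrightarrow>
  A $$ (0,1) = B $$ (0,1) \<Longrightarrow> A $$ (1,0) = B $$ (1,0) \<Longrightarrow> A $$ (1,1) = B $$ (1,1) \<Longrightarrow> A = B"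
  by (rule eq_matI) (auto simp: less2)

lemma mult2_entry: "A \<in> carrier_mat 2 2 \<Longrightarrow> B \<in> carrier_mat 2 2 \<Longrightarrow> i < 2 \<Longrightarrow> j < 2 \<Longrightarrow>
  (A * B) $$ (i,j) = A $$ (i,0) * B $$ (0,j) + A $$ (i,1) * B $$ (1,j)"
  by (subst mult_entry[of A 2 2 B 2]) (auto simp: numeral_2_eq_2)

lemma mtrace2: "A \<in> carrier_mat 2 2 \<Longrightarrow> mtrace A = A $$ (0,0) + A $$ (1,1)"
  by (simp add: mtrace_def numeral_2_eq_2)

lemma pc_herm20: "pc x y z \<in> herm20"
proof -
  have "adj (pc x y z) = pc x y z"
    by (rule eq_mat2I) (auto simp: complex_eq_iff)
  moreover have "mtrace (pc x y z) = 0" by (simp add: mtrace2)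
  ultimately show ?thesis by (simp add: herm20_def herm_def)
qed

lemma herm20_pc: assumes "A \<in> herm20"
  shows "A = pc (Re (A $$ (1,0))) (Im (A $$ (1,0))) (Re (A $$ (0,0)))"
proof -
  from assms have A: "A \<in> carrier_mat 2 2" and h: "adj A = A" and t: "mtrace A = 0"
    by (auto simp: herm20_def herm_def)
  have e00: "cnj (A $$ (0,0)) = A $$ (0,0)" using arg_cong[OF h, of "\<lambda>M. M $$ (0,0)"] A by simp
  have e01: "cnj (A $$ (1,0)) = A $$ (0,1)" using arg_cong[OF h, of "\<lambda>M. M $$ (0,1)"] A by simp
  have e11: "A $$ (1,1) = - A $$ (0,0)" using t A by (simp add: mtrace2 add_eq_0_iff)
  have r: "Im (A $$ (0,0)) = 0" using e00 by (simp add: complex_eq_iff)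
  show ?thesis
    by (rule eq_mat2I[OF A]) (use r e01 e11 in \<open>auto simp: complex_eq_iff\<close>)
qed

lemma pc_lin: "of_real a \<cdot>\<^sub>m pc x y z + of_real b \<cdot>\<^sub>m pc x' y' z' = pc (a*x+b*x') (a*y+b*y') (a*z+b*z')"
  by (rule eq_mat2I) (auto simp: algebra_simps)

lemma herm20_lin: "A \<in> herm20 \<Longrightarrow> B \<in> herm20 \<Longrightarrow> of_real a \<cdot>\<^sub>m A + of_real b \<cdot>\<^sub>m B \<in> herm20"
  by (metis herm20_pc pc_herm20 pc_lin)

lemma pc_sq: "pc x y z * pc x y z = of_real (x^2+y^2+z^2) \<cdot>\<^sub>m 1\<^sub>m 2"
  apply (rule eq_mat2I)
  apply (rule mult_carrier_mat[OF pc_carrier pc_carrier])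
  apply simp
  apply (simp_all add: mult2_entry[OF pc_carrier pc_carrier] del: index_mult_mat)
  apply (simp_all add: complex_eq_iff power2_eq_square algebra_simps)
  done

lemma pc_iherm: assumes "x^2+y^2+z^2 = 1" shows "pc x y z \<in> iherm20"
proof -
  have h: "adj (pc x y z) = pc x y z" using pc_herm20[of x y z] by (simp add: herm20_def herm_def)
  have "pc x y z * pc x y z = 1\<^sub>m 2" using assms pc_sq[of x y z] by simp
  then show ?thesis using pc_herm20[of x y z] h by (simp add: iherm20_def unitary_def)
qed

lemma kron_dim[simp]: "dim_row (kron A B) = dim_row A * dim_row B" "dim_col (kron A B) = dim_col A * dim_col B"
  by (simp_all add: kron_def)

lemma kron_carrier: "A \<in> carrier_mat a b \<Longrightarrow> B \<in> carrier_mat c d \<Longrightarrow> kron A B \<in> carrier_mat (a*c) (b*d)"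
  by (rule carrier_matI) (simp_all add: carrier_matD)

lemma div_mod_bounds: "(i::nat) < a * b \<Longrightarrow> i div b < a \<and> i mod b < b"
  by (metis less_mult_imp_div_less mod_less_divisor mult_0_right neq0_conv not_less0)

lemma kron_index: "i < dim_row A * dim_row B \<Longrightarrow> j < dim_col A * dim_col B \<Longrightarrow>
  kron A B $$ (i,j) = A $$ (i div dim_row B, j div dim_col B) * B $$ (i mod dim_row B, j mod dim_col B)"
  by (simp add: kron_def)

lemma kron2: assumes A: "A \<in> carrier_mat 2 2"
  shows "kron A (1\<^sub>m p) = four_block_mat (A $$ (0,0) \<cdot>\<^sub>m 1\<^sub>m p) (A $$ (0,1) \<cdot>\<^sub>m 1\<^sub>m p) (A $$ (1,0) \<cdot>\<^sub>m 1\<^sub>m p) (A $$ (1,1) \<cdot>\<^sub>m 1\<^sub>m p)"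
proof (rule eq_matI)
  fix i j assume i: "i < dim_row (four_block_mat (A $$ (0,0) \<cdot>\<^sub>m 1\<^sub>m p) (A $$ (0,1) \<cdot>\<^sub>m 1\<^sub>m p) (A $$ (1,0) \<cdot>\<^sub>m 1\<^sub>m p) (A $$ (1,1) \<cdot>\<^sub>m 1\<^sub>m p))"
    and j: "j < dim_col (four_block_mat (A $$ (0,0) \<cdot>\<^sub>m 1\<^sub>m p) (A $$ (0,1) \<cdot>\<^sub>m 1\<^sub>m p) (A $$ (1,0) \<cdot>\<^sub>m 1\<^sub>m p) (A $$ (1,1) \<cdot>\<^sub>m 1\<^sub>m p))"
  then have i2: "i < p + p" and j2: "j < p + p" by auto
  have di: "i div p = (if i < p then 0 else 1)" "i mod p = (if i < p then i else i - p)"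
    using i2 by (auto simp: div_if mod_if)
  have dj: "j div p = (if j < p then 0 else 1)" "j mod p = (if j < p then j else j - p)"
    using j2 by (auto simp: div_if mod_if)
  have "kron A (1\<^sub>m p) $$ (i,j) = A $$ (i div p, j div p) * 1\<^sub>m p $$ (i mod p, j mod p)"
    using A i2 j2 by (subst kron_index) auto
  also have "\<dots> = four_block_mat (A $$ (0,0) \<cdot>\<^sub>m 1\<^sub>m p) (A $$ (0,1) \<cdot>\<^sub>m 1\<^sub>m p) (A $$ (1,0) \<cdot>\<^sub>m 1\<^sub>m p) (A $$ (1,1) \<cdot>\<^sub>m 1\<^sub>m p) $$ (i,j)"
    using i2 j2 unfolding di dj by (auto)
  finally show "kron A (1\<^sub>m p) $$ (i,j) = four_block_mat (A $$ (0,0) \<cdot>\<^sub>m 1\<^sub>m p) (A $$ (0,1) \<cdot>\<^sub>m 1\<^sub>m p) (A $$ (1,0) \<cdot>\<^sub>m 1\<^sub>m p) (A $$ (1,1) \<cdot>\<^sub>m 1\<^sub>m p) $$ (i,j)" .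
qed (use A in auto)

lemma kron_lin: assumes "A \<in> carrier_mat 2 2" "B \<in> carrier_mat 2 2"
  shows "kron (a \<cdot>\<^sub>m A + b \<cdot>\<^sub>m B) C = a \<cdot>\<^sub>m kron A C + b \<cdot>\<^sub>m kron B C"
proof (rule eq_matI)
  fix i j assume i: "i < dim_row (a \<cdot>\<^sub>m kron A C + b \<cdot>\<^sub>m kron B C)" and j: "j < dim_col (a \<cdot>\<^sub>m kron A C + b \<cdot>\<^sub>m kron B C)"
  then have i2: "i < 2 * dim_row C" and j2: "j < 2 * dim_col C" using assms by auto
  show "kron (a \<cdot>\<^sub>m A + b \<cdot>\<^sub>m B) C $$ (i,j) = (a \<cdot>\<^sub>m kron A C + b \<cdot>\<^sub>m kron B C) $$ (i,j)"
    using assms i2 j2 div_mod_bounds[OF i2] div_mod_bounds[OF j2]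
    by (simp add: kron_index algebra_simps)
qed (use assms in auto)

lemma dsum_lin: assumes X1: "X1 \<in> carrier_mat n1 n1" and Y1: "Y1 \<in> carrier_mat n1 n1"
  and X2: "X2 \<in> carrier_mat n2 n2" and Y2: "Y2 \<in> carrier_mat n2 n2"
  shows "dsum (a \<cdot>\<^sub>m X1 + b \<cdot>\<^sub>m Y1) (a \<cdot>\<^sub>m X2 + b \<cdot>\<^sub>m Y2) = a \<cdot>\<^sub>m dsum X1 X2 + b \<cdot>\<^sub>m dsum Y1 Y2"
proof -
  have dX: "dsum X1 X2 = four_block_mat X1 (0\<^sub>m n1 n2) (0\<^sub>m n2 n1) X2"
    using X1 X2 by (simp add: dsum_def)
  have dY: "dsum Y1 Y2 = four_block_mat Y1 (0\<^sub>m n1 n2) (0\<^sub>m n2 n1) Y2"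
    using Y1 Y2 by (simp add: dsum_def)
  have "a \<cdot>\<^sub>m dsum X1 X2 = four_block_mat (a \<cdot>\<^sub>m X1) (a \<cdot>\<^sub>m 0\<^sub>m n1 n2) (a \<cdot>\<^sub>m 0\<^sub>m n2 n1) (a \<cdot>\<^sub>m X2)"
    unfolding dX by (rule smult_four_block_mat) (use X1 X2 in auto)
  moreover have "b \<cdot>\<^sub>m dsum Y1 Y2 = four_block_mat (b \<cdot>\<^sub>m Y1) (b \<cdot>\<^sub>m 0\<^sub>m n1 n2) (b \<cdot>\<^sub>m 0\<^sub>m n2 n1) (b \<cdot>\<^sub>m Y2)"
    unfolding dY by (rule smult_four_block_mat) (use Y1 Y2 in auto)
  ultimately have "a \<cdot>\<^sub>m dsum X1 X2 + b \<cdot>\<^sub>m dsum Y1 Y2 =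
     four_block_mat (a \<cdot>\<^sub>m X1 + b \<cdot>\<^sub>m Y1) (a \<cdot>\<^sub>m 0\<^sub>m n1 n2 + b \<cdot>\<^sub>m 0\<^sub>m n1 n2)
       (a \<cdot>\<^sub>m 0\<^sub>m n2 n1 + b \<cdot>\<^sub>m 0\<^sub>m n2 n1) (a \<cdot>\<^sub>m X2 + b \<cdot>\<^sub>m Y2)"
    by (simp only:) (rule add_four_block_mat, use X1 X2 Y1 Y2 in auto)
  also have "\<dots> = dsum (a \<cdot>\<^sub>m X1 + b \<cdot>\<^sub>m Y1) (a \<cdot>\<^sub>m X2 + b \<cdot>\<^sub>m Y2)"
    unfolding dsum_def using X1 X2 Y1 Y2 by (intro cong_four_block_mat) auto
  finally show ?thesis by simp
qed

definition DD :: "nat \<Rightarrow> nat \<Rightarrow> complex mat \<Rightarrow> complex mat" where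
  "DD p q A = dsum (kron A (1\<^sub>m p)) (kron (- A) (1\<^sub>m q))"

lemma DD_carrier: "A \<in> carrier_mat 2 2 \<Longrightarrow> DD p q A \<in> carrier_mat (2*p + 2*q) (2*p + 2*q)"
  by (rule carrier_matI) (simp_all add: DD_def dsum_def carrier_matD)

lemma DD_lin: assumes A: "A \<in> carrier_mat 2 2" and B: "B \<in> carrier_mat 2 2"
  shows "DD p q (a \<cdot>\<^sub>m A + b \<cdot>\<^sub>m B) = a \<cdot>\<^sub>m DD p q A + b \<cdot>\<^sub>m DD p q B"
proof -
  have "- (a \<cdot>\<^sub>m A + b \<cdot>\<^sub>m B) = a \<cdot>\<^sub>m (- A) + b \<cdot>\<^sub>m (- B)"
    using A B by (intro eq_matI) auto
  then show ?thesis unfolding DD_def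
    using A B by (simp add: kron_lin dsum_lin[of _ "2*p" _ _ "2*q"] kron_carrier)
qed

lemma sI_mult: "(a \<cdot>\<^sub>m 1\<^sub>m p) * (b \<cdot>\<^sub>m 1\<^sub>m p) + (c \<cdot>\<^sub>m 1\<^sub>m p) * (d \<cdot>\<^sub>m 1\<^sub>m p) = (a * b + c * d) \<cdot>\<^sub>m (1\<^sub>m p :: complex mat)"
  by (simp add: dsmultL dsmultR) (rule eq_matI, auto simp: algebra_simps)

lemma kron2_mult: assumes A: "A \<in> carrier_mat 2 2" and B: "B \<in> carrier_mat 2 2"
  shows "kron A (1\<^sub>m p) * kron B (1\<^sub>m p) = kron (A * B) (1\<^sub>m p)"
proof -
  have AB: "A * B \<in> carrier_mat 2 2" using A B by simp
  have "kron A (1\<^sub>m p) * kron B (1\<^sub>m p) =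
    four_block_mat (A $$ (0,0) \<cdot>\<^sub>m 1\<^sub>m p) (A $$ (0,1) \<cdot>\<^sub>m 1\<^sub>m p) (A $$ (1,0) \<cdot>\<^sub>m 1\<^sub>m p) (A $$ (1,1) \<cdot>\<^sub>m 1\<^sub>m p) *
    four_block_mat (B $$ (0,0) \<cdot>\<^sub>m 1\<^sub>m p) (B $$ (0,1) \<cdot>\<^sub>m 1\<^sub>m p) (B $$ (1,0) \<cdot>\<^sub>m 1\<^sub>m p) (B $$ (1,1) \<cdot>\<^sub>m 1\<^sub>m p)"
    by (simp only: kron2[OF A] kron2[OF B])
  also have "\<dots> = four_block_mat
     ((A $$ (0,0) \<cdot>\<^sub>m 1\<^sub>m p) * (B $$ (0,0) \<cdot>\<^sub>m 1\<^sub>m p) + (A $$ (0,1) \<cdot>\<^sub>m 1\<^sub>m p) * (B $$ (1,0) \<cdot>\<^sub>m 1\<^sub>m p))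
     ((A $$ (0,0) \<cdot>\<^sub>m 1\<^sub>m p) * (B $$ (0,1) \<cdot>\<^sub>m 1\<^sub>m p) + (A $$ (0,1) \<cdot>\<^sub>m 1\<^sub>m p) * (B $$ (1,1) \<cdot>\<^sub>m 1\<^sub>m p))
     ((A $$ (1,0) \<cdot>\<^sub>m 1\<^sub>m p) * (B $$ (0,0) \<cdot>\<^sub>m 1\<^sub>m p) + (A $$ (1,1) \<cdot>\<^sub>m 1\<^sub>m p) * (B $$ (1,0) \<cdot>\<^sub>m 1\<^sub>m p))
     ((A $$ (1,0) \<cdot>\<^sub>m 1\<^sub>m p) * (B $$ (0,1) \<cdot>\<^sub>m 1\<^sub>m p) + (A $$ (1,1) \<cdot>\<^sub>m 1\<^sub>m p) * (B $$ (1,1) \<cdot>\<^sub>m 1\<^sub>m p))"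
    by (rule mult_four_block_mat) auto
  also have "\<dots> = four_block_mat ((A*B) $$ (0,0) \<cdot>\<^sub>m 1\<^sub>m p) ((A*B) $$ (0,1) \<cdot>\<^sub>m 1\<^sub>m p) ((A*B) $$ (1,0) \<cdot>\<^sub>m 1\<^sub>m p) ((A*B) $$ (1,1) \<cdot>\<^sub>m 1\<^sub>m p)"
    unfolding sI_mult using A B by (simp add: mult2_entry del: index_mult_mat)
  also have "\<dots> = kron (A * B) (1\<^sub>m p)" by (simp only: kron2[OF AB])
  finally show ?thesis .
qed

lemma kron_one2: "kron (1\<^sub>m 2) (1\<^sub>m p) = (1\<^sub>m (2*p) :: complex mat)"
proof -
  have "kron (1\<^sub>m 2) (1\<^sub>m p) = four_block_mat (1\<^sub>m p) (0\<^sub>m p p) (0\<^sub>m p p) (1\<^sub>m p :: complex mat)"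
    by (subst kron2) (auto intro!: cong_four_block_mat eq_matI)
  also have "\<dots> = 1\<^sub>m (p + p)" by simp
  finally show ?thesis by (simp add: mult_2)
qed

lemma dsum_mult: assumes "K \<in> carrier_mat n1 n1" "K' \<in> carrier_mat n1 n1" "L \<in> carrier_mat n2 n2" "L' \<in> carrier_mat n2 n2"
  shows "dsum K L * dsum K' L' = dsum (K * K') (L * L')"
proof -
  have "dsum K L * dsum K' L' = four_block_mat K (0\<^sub>m n1 n2) (0\<^sub>m n2 n1) L * four_block_mat K' (0\<^sub>m n1 n2) (0\<^sub>m n2 n1) L'"
    using assms by (simp add: dsum_def)
  also have "\<dots> = four_block_mat (K * K' + 0\<^sub>m n1 n2 * 0\<^sub>m n2 n1) (K * 0\<^sub>m n1 n2 + 0\<^sub>m n1 n2 * L')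
     (0\<^sub>m n2 n1 * K' + L * 0\<^sub>m n2 n1) (0\<^sub>m n2 n1 * 0\<^sub>m n1 n2 + L * L')"
    by (rule mult_four_block_mat) (use assms in auto)
  also have "\<dots> = dsum (K * K') (L * L')"
    using assms unfolding dsum_def by (intro cong_four_block_mat) auto
  finally show ?thesis .
qed

lemma DD_sq: assumes A: "A \<in> carrier_mat 2 2" and AA: "A * A = 1\<^sub>m 2"
  shows "DD p q A * DD p q A = 1\<^sub>m (2*p + 2*q)"
proof -
  have mA: "- A \<in> carrier_mat 2 2" using A by simp
  have mAA: "(- A) * (- A) = A * A" using A by (simp add: carrier_matD)
  have "DD p q A * DD p q A = dsum (kron A (1\<^sub>m p) * kron A (1\<^sub>m p)) (kron (- A) (1\<^sub>m q) * kron (- A) (1\<^sub>m q))"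
    unfolding DD_def by (rule dsum_mult) (use A mA in \<open>auto intro: kron_carrier\<close>)
  also have "\<dots> = dsum (1\<^sub>m (2*p)) (1\<^sub>m (2*q))"
    unfolding kron2_mult[OF A A] kron2_mult[OF mA mA] mAA using AA by (simp add: kron_one2)
  also have "\<dots> = 1\<^sub>m (2*p + 2*q)" by (simp add: dsum_def)
  finally show ?thesis .
qed

lemma ii_to_i:
  assumes herm: "\<forall>A\<in>herm20. \<phi> A \<in> herm m"
    and U: "U \<in> unitary m" and m: "m = 2 * (p + q)"
    and rep: "\<forall>A\<in>herm20. \<phi> A = U * dsum (kron A (1\<^sub>m p)) (kron (- A) (1\<^sub>m q)) * adj U"
  shows "real_linear_on herm20 \<phi> \<and> (\<forall>A\<in>iherm20. \<phi> A \<in> herm m \<inter> unitary m)"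
proof -
  have Uc: "U \<in> carrier_mat m m" and UU: "adj U * U = 1\<^sub>m m" and UU': "U * adj U = 1\<^sub>m m"
    using U by (auto simp: unitary_def)
  have m': "2*p + 2*q = m" using m by simp
  have rep': "\<phi> A = U * DD p q A * adj U" if "A \<in> herm20" for A
    using rep that by (simp add: DD_def)
  have c2: "A \<in> carrier_mat 2 2" if "A \<in> herm20" for A
    using that by (simp add: herm20_def herm_def)
  have Dc: "DD p q A \<in> carrier_mat m m" if "A \<in> herm20" for A
    using DD_carrier[OF c2[OF that], of p q] m' by simp
  have lin: "real_linear_on herm20 \<phi>"
    unfolding real_linear_on_def
  proof (intro ballI allI)
    fix A B a b assume A: "A \<in> herm20" and B: "B \<in> herm20"
    have "\<phi> (complex_of_real a \<cdot>\<^sub>m A + complex_of_real b \<cdot>\<^sub>m B)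
       = U * DD p q (complex_of_real a \<cdot>\<^sub>m A + complex_of_real b \<cdot>\<^sub>m B) * adj U"
      by (rule rep'[OF herm20_lin[OF A B]])
    also have "\<dots> = U * (complex_of_real a \<cdot>\<^sub>m DD p q A + complex_of_real b \<cdot>\<^sub>m DD p q B) * adj U"
      by (simp only: DD_lin[OF c2[OF A] c2[OF B]])
    also have "\<dots> = complex_of_real a \<cdot>\<^sub>m (U * DD p q A * adj U) + complex_of_real b \<cdot>\<^sub>m (U * DD p q B * adj U)"
      using Uc Dc[OF A] Dc[OF B] by (simp add: dsimps)
    also have "\<dots> = complex_of_real a \<cdot>\<^sub>m \<phi> A + complex_of_real b \<cdot>\<^sub>m \<phi> B"
      using rep' A B by simp
    finally show "\<phi> (complex_of_real a \<cdot>\<^sub>m A + complex_of_real b \<cdot>\<^sub>m B) = complex_of_real a \<cdot>\<^sub>m \<phi> A + complex_of_real b \<cdot>\<^sub>m \<phi> B" .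
  qed
  have uni: "\<phi> A \<in> herm m \<inter> unitary m" if A: "A \<in> iherm20" for A
  proof -
    have A20: "A \<in> herm20" using A by (simp add: iherm20_def)
    have Ah: "adj A = A" and AA: "adj A * A = 1\<^sub>m 2" using A by (auto simp: iherm20_def herm20_def herm_def unitary_def)
    have DD: "DD p q A * DD p q A = 1\<^sub>m m" using DD_sq[OF c2[OF A20]] AA Ah m' by simp
    have h: "\<phi> A \<in> herm m" using herm A20 by blast
    then have pc: "\<phi> A \<in> carrier_mat m m" and ph: "adj (\<phi> A) = \<phi> A" by (auto simp: herm_def)
    have "\<phi> A * \<phi> A = U * DD p q A * (adj U * U) * DD p q A * adj U"
      using Uc Dc[OF A20] by (simp add: rep'[OF A20] dassoc)
    also have "\<dots> = U * (DD p q A * DD p q A) * adj U"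
      using Uc Dc[OF A20] by (simp add: UU dassoc)
    also have "\<dots> = 1\<^sub>m m" using Uc UU' by (simp add: DD)
    finally have sq: "\<phi> A * \<phi> A = 1\<^sub>m m" .
    show ?thesis using h pc sq ph by (simp add: unitary_def)
  qed
  show ?thesis using lin uni by blast
qed

lemma uminus_zero_mat[simp]: "- (0\<^sub>m n k) = (0\<^sub>m n k :: complex mat)"
  by (rule eq_matI) simp_all

locale cliff =
  fixes m :: nat and S1 S2 S3 :: "complex mat"
  assumes c1: "S1 \<in> carrier_mat m m" and c2: "S2 \<in> carrier_mat m m" and c3: "S3 \<in> carrier_mat m m"
    and h1: "adj S1 = S1" and h2: "adj S2 = S2" and h3: "adj S3 = S3"
    and q1: "S1 * S1 = 1\<^sub>m m" and q2: "S2 * S2 = 1\<^sub>m m" and q3: "S3 * S3 = 1\<^sub>m m"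
    and a12: "S2 * S1 = - (S1 * S2)" and a13: "S3 * S1 = - (S1 * S3)" and a23: "S3 * S2 = - (S2 * S3)"
begin

lemma dims[simp]: "dim_row S1 = m" "dim_col S1 = m" "dim_row S2 = m" "dim_col S2 = m" "dim_row S3 = m" "dim_col S3 = m"
  using c1 c2 c3 by auto

lemma w11: "dim_row X = m \<Longrightarrow> S1 * (S1 * X) = X"
  by (simp flip: dassoc add: q1)
lemma w22: "dim_row X = m \<Longrightarrow> S2 * (S2 * X) = X"
  by (simp flip: dassoc add: q2)
lemma w33: "dim_row X = m \<Longrightarrow> S3 * (S3 * X) = X"
  by (simp flip: dassoc add: q3)
lemma w21: "dim_row X = m \<Longrightarrow> S2 * (S1 * X) = - (S1 * (S2 * X))"
  by (simp flip: dassoc add: a12)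
lemma w31: "dim_row X = m \<Longrightarrow> S3 * (S1 * X) = - (S1 * (S3 * X))"
  by (simp flip: dassoc add: a13)
lemma w32: "dim_row X = m \<Longrightarrow> S3 * (S2 * X) = - (S2 * (S3 * X))"
  by (simp flip: dassoc add: a23)

lemmas wsimps = q1 q2 q3 a12 a13 a23 w11 w22 w33 w21 w31 w32 dsimps smult_smult_mat h1 h2 h3

definition "E1 = (1/4) \<cdot>\<^sub>m (1\<^sub>m m + S3 - \<i> \<cdot>\<^sub>m (S1 * S2) - \<i> \<cdot>\<^sub>m (S1 * (S2 * S3)))"
definition "E2 = (1/4) \<cdot>\<^sub>m (1\<^sub>m m - S3 - \<i> \<cdot>\<^sub>m (S1 * S2) + \<i> \<cdot>\<^sub>m (S1 * (S2 * S3)))"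

lemma E1c: "E1 \<in> carrier_mat m m" by (rule carrier_matI) (simp_all add: E1_def)
lemma E2c: "E2 \<in> carrier_mat m m" by (rule carrier_matI) (simp_all add: E2_def)

lemma E1h: "adj E1 = E1"
  unfolding E1_def
  apply (simp add: adj_add adj_minus adj_mult wsimps)
  apply (rule eq_matI)
  apply (simp_all add: algebra_simps del: index_mult_mat(1))
  done

lemma E2h: "adj E2 = E2"
  unfolding E2_def
  apply (simp add: adj_add adj_minus adj_mult wsimps)
  apply (rule eq_matI)
  apply (simp_all add: algebra_simps del: index_mult_mat(1))
  done

lemma E1i: "E1 * E1 = E1"
  unfolding E1_def
  apply (simp add: wsimps)
  apply (rule eq_matI)
  apply (simp_all add: algebra_simps del: index_mult_mat(1))
  done

lemma E2i: "E2 * E2 = E2"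
  unfolding E2_def
  apply (simp add: wsimps)
  apply (rule eq_matI)
  apply (simp_all add: algebra_simps del: index_mult_mat(1))
  done

lemma S3E1: "S3 * E1 = E1"
  unfolding E1_def
  apply (simp add: wsimps)
  apply (rule eq_matI)
  apply (simp_all add: algebra_simps del: index_mult_mat(1))
  done

lemma S2E1: "S2 * E1 = \<i> \<cdot>\<^sub>m (S1 * E1)"
  unfolding E1_def
  apply (simp add: wsimps)
  apply (rule eq_matI)
  apply (simp_all add: algebra_simps del: index_mult_mat(1))
  done

lemma S3E2: "S3 * E2 = - E2"
  unfolding E2_def
  apply (simp add: wsimps)
  apply (rule eq_matI)
  apply (simp_all add: algebra_simps del: index_mult_mat(1))
  done

lemma S2E2: "S2 * E2 = \<i> \<cdot>\<^sub>m (S1 * E2)"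
  unfolding E2_def
  apply (simp add: wsimps)
  apply (rule eq_matI)
  apply (simp_all add: algebra_simps del: index_mult_mat(1))
  done

lemma E12: "E1 * E2 = 0\<^sub>m m m"
  unfolding E1_def E2_def
  apply (simp add: wsimps)
  apply (rule eq_matI)
  apply (simp_all add: algebra_simps del: index_mult_mat(1))
  done

lemma E21: "E2 * E1 = 0\<^sub>m m m"
  unfolding E1_def E2_def
  apply (simp add: wsimps)
  apply (rule eq_matI)
  apply (simp_all add: algebra_simps del: index_mult_mat(1))
  done

lemma E1S1E1: "E1 * (S1 * E1) = 0\<^sub>m m m"
  unfolding E1_def
  apply (simp add: wsimps)
  apply (rule eq_matI)
  apply (simp_all add: algebra_simps del: index_mult_mat(1))
  done

lemma E2S1E2: "E2 * (S1 * E2) = 0\<^sub>m m m"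
  unfolding E2_def
  apply (simp add: wsimps)
  apply (rule eq_matI)
  apply (simp_all add: algebra_simps del: index_mult_mat(1))
  done

lemma E1S1E2: "E1 * (S1 * E2) = 0\<^sub>m m m"
  unfolding E1_def E2_def
  apply (simp add: wsimps)
  apply (rule eq_matI)
  apply (simp_all add: algebra_simps del: index_mult_mat(1))
  done

lemma E2S1E1: "E2 * (S1 * E1) = 0\<^sub>m m m"
  unfolding E1_def E2_def
  apply (simp add: wsimps)
  apply (rule eq_matI)
  apply (simp_all add: algebra_simps del: index_mult_mat(1))
  done

lemma Esum: "E1 + S1 * (E1 * S1) + (E2 + S1 * (E2 * S1)) = 1\<^sub>m m"
  unfolding E1_def E2_def
  apply (simp add: wsimps)
  apply (rule eq_matI)
  apply (simp_all add: algebra_simps del: index_mult_mat(1))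
  done


lemma construct:
  assumes V1: "V1 \<in> carrier_mat m p" and VV1: "adj V1 * V1 = 1\<^sub>m p" and VE1: "V1 * adj V1 = E1"
    and V2: "V2 \<in> carrier_mat m q" and VV2: "adj V2 * V2 = 1\<^sub>m q" and VE2: "V2 * adj V2 = E2"
  defines "U \<equiv> cc (cc V1 (S1 * V1)) (cc V2 (- (S1 * V2)))"
  shows "U \<in> carrier_mat m (p + p + (q + q))" "adj U * U = 1\<^sub>m (p + p + (q + q))" "U * adj U = 1\<^sub>m m"
proof -
  have d1[simp]: "dim_row V1 = m" "dim_col V1 = p" using V1 by auto
  have d2[simp]: "dim_row V2 = m" "dim_col V2 = q" using V2 by auto
  have E1d[simp]: "dim_row E1 = m" "dim_col E1 = m" using E1c by auto
  have E2d[simp]: "dim_row E2 = m" "dim_col E2 = m" using E2c by auto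
  have EV1: "E1 * V1 = V1" unfolding VE1[symmetric] using VV1 by (simp add: dassoc)
  have EV2: "E2 * V2 = V2" unfolding VE2[symmetric] using VV2 by (simp add: dassoc)
  have VE1': "adj V1 * E1 = adj V1" unfolding VE1[symmetric] using VV1 by (simp flip: dassoc)
  have VE2': "adj V2 * E2 = adj V2" unfolding VE2[symmetric] using VV2 by (simp flip: dassoc)
  have Z12: "adj V1 * V2 = 0\<^sub>m p q"
  proof -
    have "adj V1 * V2 = (adj V1 * E1) * (E2 * V2)" by (simp only: EV2 VE1')
    also have "\<dots> = adj V1 * ((E1 * E2) * V2)" by (simp add: dassoc)
    finally show ?thesis by (simp add: E12)
  qed
  have Z21: "adj V2 * V1 = 0\<^sub>m q p"
  proof -
    have "adj V2 * V1 = (adj V2 * E2) * (E1 * V1)" by (simp only: EV1 VE2')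
    also have "\<dots> = adj V2 * ((E2 * E1) * V1)" by (simp add: dassoc)
    finally show ?thesis by (simp add: E21)
  qed
  have W11: "adj V1 * (S1 * V1) = 0\<^sub>m p p"
  proof -
    have "adj V1 * (S1 * V1) = (adj V1 * E1) * (S1 * (E1 * V1))" by (simp only: EV1 VE1')
    also have "\<dots> = adj V1 * ((E1 * (S1 * E1)) * V1)" by (simp add: dassoc)
    finally show ?thesis by (simp add: E1S1E1)
  qed
  have W12: "adj V1 * (S1 * V2) = 0\<^sub>m p q"
  proof -
    have "adj V1 * (S1 * V2) = (adj V1 * E1) * (S1 * (E2 * V2))" by (simp only: EV2 VE1')
    also have "\<dots> = adj V1 * ((E1 * (S1 * E2)) * V2)" by (simp add: dassoc)
    finally show ?thesis by (simp add: E1S1E2)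
  qed
  have W21: "adj V2 * (S1 * V1) = 0\<^sub>m q p"
  proof -
    have "adj V2 * (S1 * V1) = (adj V2 * E2) * (S1 * (E1 * V1))" by (simp only: EV1 VE2')
    also have "\<dots> = adj V2 * ((E2 * (S1 * E1)) * V1)" by (simp add: dassoc)
    finally show ?thesis by (simp add: E2S1E1)
  qed
  have W22: "adj V2 * (S1 * V2) = 0\<^sub>m q q"
  proof -
    have "adj V2 * (S1 * V2) = (adj V2 * E2) * (S1 * (E2 * V2))" by (simp only: EV2 VE2')
    also have "\<dots> = adj V2 * ((E2 * (S1 * E2)) * V2)" by (simp add: dassoc)
    finally show ?thesis by (simp add: E2S1E2)
  qed
  define X1 where "X1 = S1 * V1"
  define X2 where "X2 = - (S1 * V2)"
  have X1c: "X1 \<in> carrier_mat m p" using V1 c1 by (simp add: X1_def)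
  have X2c: "X2 \<in> carrier_mat m q" using V2 c1 by (simp add: X2_def)
  have aX1: "adj X1 = adj V1 * S1" by (simp add: X1_def adj_mult h1)
  have aX2: "adj X2 = - (adj V2 * S1)" by (simp add: X2_def adj_mult h1)
  have A: "cc V1 X1 \<in> carrier_mat m (p + p)" using V1 X1c by simp
  have B: "cc V2 X2 \<in> carrier_mat m (q + q)" using V2 X2c by simp
  show Uc: "U \<in> carrier_mat m (p + p + (q + q))" unfolding U_def X1_def[symmetric] X2_def[symmetric] using A B by simp
  have b11: "adj X1 * V1 = 0\<^sub>m p p" "adj X1 * X1 = 1\<^sub>m p" "adj X1 * V2 = 0\<^sub>m p q" "adj X1 * X2 = 0\<^sub>m p q"
    unfolding aX1 unfolding X1_def X2_def by (simp_all add: dassoc w11 W11 VV1 W12 Z12)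
  have b12: "adj V1 * X1 = 0\<^sub>m p p" "adj V1 * X2 = 0\<^sub>m p q"
    unfolding X1_def X2_def by (simp_all add: W11 W12)
  have b21: "adj X2 * V1 = 0\<^sub>m q p" "adj X2 * X1 = 0\<^sub>m q p" "adj X2 * V2 = 0\<^sub>m q q" "adj X2 * X2 = 1\<^sub>m q"
    unfolding aX2 unfolding X1_def X2_def by (simp_all add: dassoc w11 W21 Z21 W22 VV2)
  have b22: "adj V2 * X1 = 0\<^sub>m q p" "adj V2 * X2 = 0\<^sub>m q q"
    unfolding X1_def X2_def by (simp_all add: W21 W22)
  have "adj U * U = four_block_mat (adj (cc V1 X1) * cc V1 X1) (adj (cc V1 X1) * cc V2 X2)
     (adj (cc V2 X2) * cc V1 X1) (adj (cc V2 X2) * cc V2 X2)"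
    unfolding U_def X1_def[symmetric] X2_def[symmetric] by (rule adj_cc_mult_cc[OF A B A B])
  also have "\<dots> = four_block_mat (four_block_mat (1\<^sub>m p) (0\<^sub>m p p) (0\<^sub>m p p) (1\<^sub>m p))
       (four_block_mat (0\<^sub>m p q) (0\<^sub>m p q) (0\<^sub>m p q) (0\<^sub>m p q))
       (four_block_mat (0\<^sub>m q p) (0\<^sub>m q p) (0\<^sub>m q p) (0\<^sub>m q p))
       (four_block_mat (1\<^sub>m q) (0\<^sub>m q q) (0\<^sub>m q q) (1\<^sub>m q))"
    unfolding adj_cc_mult_cc[OF V1 X1c V1 X1c] adj_cc_mult_cc[OF V1 X1c V2 X2c]
      adj_cc_mult_cc[OF V2 X2c V1 X1c] adj_cc_mult_cc[OF V2 X2c V2 X2c]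
    by (simp only: b11 b12 b21 b22 VV1 VV2 Z12 Z21)
  also have "\<dots> = 1\<^sub>m (p + p + (q + q))"
    by (simp del: four_block_one_mat add: four_block_one_mat[symmetric])
  finally show "adj U * U = 1\<^sub>m (p + p + (q + q))" .
  have x1: "X1 * adj X1 = S1 * (E1 * S1)"
    unfolding aX1 unfolding X1_def by (simp add: dassoc) (simp flip: dassoc add: VE1)
  have x2: "X2 * adj X2 = S1 * (E2 * S1)"
    unfolding aX2 unfolding X2_def by (simp add: dassoc) (simp flip: dassoc add: VE2)
  have "U * adj U = cc V1 X1 * adj (cc V1 X1) + cc V2 X2 * adj (cc V2 X2)"
    unfolding U_def X1_def[symmetric] X2_def[symmetric] by (rule cc_mult_adj_cc[OF A B A B])
  also have "\<dots> = E1 + S1 * (E1 * S1) + (E2 + S1 * (E2 * S1))"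
    unfolding cc_mult_adj_cc[OF V1 X1c V1 X1c] cc_mult_adj_cc[OF V2 X2c V2 X2c] VE1 VE2 x1 x2 ..
  also have "\<dots> = 1\<^sub>m m" by (rule Esum)
  finally show "U * adj U = 1\<^sub>m m" .
qed


lemma construct_rep:
  assumes V1: "V1 \<in> carrier_mat m p" and VV1: "adj V1 * V1 = 1\<^sub>m p" and VE1: "V1 * adj V1 = E1"
    and V2: "V2 \<in> carrier_mat m q" and VV2: "adj V2 * V2 = 1\<^sub>m q" and VE2: "V2 * adj V2 = E2"
  defines "U \<equiv> cc (cc V1 (S1 * V1)) (cc V2 (- (S1 * V2)))"
  shows "(of_real x \<cdot>\<^sub>m S1 + of_real y \<cdot>\<^sub>m S2 + of_real z \<cdot>\<^sub>m S3) * U = U * DD p q (pc x y z)"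
proof -
  have d1[simp]: "dim_row V1 = m" "dim_col V1 = p" using V1 by auto
  have d2[simp]: "dim_row V2 = m" "dim_col V2 = q" using V2 by auto
  have E1d[simp]: "dim_row E1 = m" "dim_col E1 = m" using E1c by auto
  have E2d[simp]: "dim_row E2 = m" "dim_col E2 = m" using E2c by auto
  have EV1: "E1 * V1 = V1" unfolding VE1[symmetric] using VV1 by (simp add: dassoc)
  have EV2: "E2 * V2 = V2" unfolding VE2[symmetric] using VV2 by (simp add: dassoc)
  have S3V1: "S3 * V1 = V1"
  proof -
    have "S3 * V1 = (S3 * E1) * V1" by (simp add: dassoc EV1)
    then show ?thesis by (simp add: S3E1 EV1)
  qed
  have S2V1: "S2 * V1 = \<i> \<cdot>\<^sub>m (S1 * V1)"
  proof -
    have "S2 * V1 = (S2 * E1) * V1" by (simp add: dassoc EV1)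
    then show ?thesis by (simp add: S2E1 dsmultL dassoc EV1)
  qed
  have S3V2: "S3 * V2 = - V2"
  proof -
    have "S3 * V2 = (S3 * E2) * V2" by (simp add: dassoc EV2)
    then show ?thesis by (simp add: S3E2 EV2)
  qed
  have S2V2: "S2 * V2 = \<i> \<cdot>\<^sub>m (S1 * V2)"
  proof -
    have "S2 * V2 = (S2 * E2) * V2" by (simp add: dassoc EV2)
    then show ?thesis by (simp add: S2E2 dsmultL dassoc EV2)
  qed
  define X1 where "X1 = S1 * V1"
  define X2 where "X2 = - (S1 * V2)"
  have X1c: "X1 \<in> carrier_mat m p" using V1 c1 by (simp add: X1_def)
  have X2c: "X2 \<in> carrier_mat m q" using V2 c1 by (simp add: X2_def)
  have A: "cc V1 X1 \<in> carrier_mat m (p + p)" using V1 X1c by simp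
  have B: "cc V2 X2 \<in> carrier_mat m (q + q)" using V2 X2c by simp
  define M where "M = of_real x \<cdot>\<^sub>m S1 + of_real y \<cdot>\<^sub>m S2 + of_real z \<cdot>\<^sub>m S3"
  have Mc: "M \<in> carrier_mat m m" unfolding M_def using c1 c2 c3 by simp
  define P where "P = pc x y z"
  have Pc: "P \<in> carrier_mat 2 2" "- P \<in> carrier_mat 2 2" by (simp_all add: P_def)
  define K where "K = four_block_mat (P $$ (0,0) \<cdot>\<^sub>m 1\<^sub>m p) (P $$ (0,1) \<cdot>\<^sub>m 1\<^sub>m p) (P $$ (1,0) \<cdot>\<^sub>m 1\<^sub>m p) (P $$ (1,1) \<cdot>\<^sub>m 1\<^sub>m p)"
  define L where "L = four_block_mat ((- P) $$ (0,0) \<cdot>\<^sub>m 1\<^sub>m q) ((- P) $$ (0,1) \<cdot>\<^sub>m 1\<^sub>m q) ((- P) $$ (1,0) \<cdot>\<^sub>m 1\<^sub>m q) ((- P) $$ (1,1) \<cdot>\<^sub>m 1\<^sub>m q)"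
  have Kc: "K \<in> carrier_mat (p + p) (p + p)" unfolding K_def by simp
  have Lc: "L \<in> carrier_mat (q + q) (q + q)" unfolding L_def by simp
  have DD: "DD p q P = four_block_mat K (0\<^sub>m (p + p) (q + q)) (0\<^sub>m (q + q) (p + p)) L"
    unfolding DD_def dsum_def kron2[OF Pc(1)] kron2[OF Pc(2)] K_def[symmetric] L_def[symmetric]
    using Kc Lc by simp
  have "U * DD p q P = cc (cc V1 X1 * K + cc V2 X2 * 0\<^sub>m (q + q) (p + p)) (cc V1 X1 * 0\<^sub>m (p + p) (q + q) + cc V2 X2 * L)"
    unfolding DD U_def X1_def[symmetric] X2_def[symmetric] by (rule cc_mult_fb[OF A B Kc _ _ Lc]) auto
  also have "\<dots> = cc (cc V1 X1 * K) (cc V2 X2 * L)"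
  proof -
    have z1: "cc V2 X2 * 0\<^sub>m (q + q) (p + p) = 0\<^sub>m m (p + p)" by (rule right_mult_zero_mat[OF B])
    have z2: "cc V1 X1 * 0\<^sub>m (p + p) (q + q) = 0\<^sub>m m (q + q)" by (rule right_mult_zero_mat[OF A])
    have k: "cc V1 X1 * K \<in> carrier_mat m (p + p)" using A Kc by simp
    have l: "cc V2 X2 * L \<in> carrier_mat m (q + q)" using B Lc by simp
    show ?thesis unfolding z1 z2 using k l by simp
  qed
  also have "cc V1 X1 * K = cc (V1 * (P $$ (0,0) \<cdot>\<^sub>m 1\<^sub>m p) + X1 * (P $$ (1,0) \<cdot>\<^sub>m 1\<^sub>m p))
      (V1 * (P $$ (0,1) \<cdot>\<^sub>m 1\<^sub>m p) + X1 * (P $$ (1,1) \<cdot>\<^sub>m 1\<^sub>m p))"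
    unfolding K_def by (rule cc_mult_fb[OF V1 X1c]) auto
  also have "cc V2 X2 * L = cc (V2 * ((- P) $$ (0,0) \<cdot>\<^sub>m 1\<^sub>m q) + X2 * ((- P) $$ (1,0) \<cdot>\<^sub>m 1\<^sub>m q))
      (V2 * ((- P) $$ (0,1) \<cdot>\<^sub>m 1\<^sub>m q) + X2 * ((- P) $$ (1,1) \<cdot>\<^sub>m 1\<^sub>m q))"
    unfolding L_def by (rule cc_mult_fb[OF V2 X2c]) auto
  finally have UD: "U * DD p q P = cc (cc (V1 * (P $$ (0,0) \<cdot>\<^sub>m 1\<^sub>m p) + X1 * (P $$ (1,0) \<cdot>\<^sub>m 1\<^sub>m p))
      (V1 * (P $$ (0,1) \<cdot>\<^sub>m 1\<^sub>m p) + X1 * (P $$ (1,1) \<cdot>\<^sub>m 1\<^sub>m p)))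
      (cc (V2 * ((- P) $$ (0,0) \<cdot>\<^sub>m 1\<^sub>m q) + X2 * ((- P) $$ (1,0) \<cdot>\<^sub>m 1\<^sub>m q))
      (V2 * ((- P) $$ (0,1) \<cdot>\<^sub>m 1\<^sub>m q) + X2 * ((- P) $$ (1,1) \<cdot>\<^sub>m 1\<^sub>m q)))" .
  have MU: "M * U = cc (cc (M * V1) (M * X1)) (cc (M * V2) (M * X2))"
    unfolding U_def X1_def[symmetric] X2_def[symmetric] mult_cc[OF Mc A B] mult_cc[OF Mc V1 X1c] mult_cc[OF Mc V2 X2c] ..
  have e1: "M * V1 = V1 * (P $$ (0,0) \<cdot>\<^sub>m 1\<^sub>m p) + X1 * (P $$ (1,0) \<cdot>\<^sub>m 1\<^sub>m p)"
    unfolding M_def X1_def P_def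
    apply (simp add: wsimps S3V1 S2V1)
    apply (rule eq_matI)
      apply (simp_all add: algebra_simps del: index_mult_mat(1))
    done
  have e2: "M * X1 = V1 * (P $$ (0,1) \<cdot>\<^sub>m 1\<^sub>m p) + X1 * (P $$ (1,1) \<cdot>\<^sub>m 1\<^sub>m p)"
    unfolding M_def X1_def P_def
    apply (simp add: wsimps S3V1 S2V1)
    apply (rule eq_matI)
      apply (simp_all add: algebra_simps del: index_mult_mat(1))
    done
  have e3: "M * V2 = V2 * ((- P) $$ (0,0) \<cdot>\<^sub>m 1\<^sub>m q) + X2 * ((- P) $$ (1,0) \<cdot>\<^sub>m 1\<^sub>m q)"
    unfolding M_def X2_def P_def
    apply (simp add: wsimps S3V2 S2V2)
    apply (rule eq_matI)
      apply (simp_all add: algebra_simps del: index_mult_mat(1))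
    done
  have e4: "M * X2 = V2 * ((- P) $$ (0,1) \<cdot>\<^sub>m 1\<^sub>m q) + X2 * ((- P) $$ (1,1) \<cdot>\<^sub>m 1\<^sub>m q)"
    unfolding M_def X2_def P_def
    apply (simp add: wsimps S3V2 S2V2)
    apply (rule eq_matI)
      apply (simp_all add: algebra_simps del: index_mult_mat(1))
    done
  show ?thesis unfolding M_def[symmetric] P_def[symmetric] MU UD e1 e2 e3 e4 ..
qed

end

lemma anti2:
  fixes S T :: "complex mat"
  assumes S: "S \<in> carrier_mat m m" and T: "T \<in> carrier_mat m m" and SS: "S * S = 1\<^sub>m m" and TT: "T * T = 1\<^sub>m m"
    and ab: "a^2 + b^2 = 1" "a * b \<noteq> 0"
    and MM: "(of_real a \<cdot>\<^sub>m S + of_real b \<cdot>\<^sub>m T) * (of_real a \<cdot>\<^sub>m S + of_real b \<cdot>\<^sub>m T) = 1\<^sub>m m"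
  shows "T * S = - (S * T)"
proof -
  have dS[simp]: "dim_row S = m" "dim_col S = m" using S by auto
  have dT[simp]: "dim_row T = m" "dim_col T = m" using T by auto
  have exp: "(of_real a \<cdot>\<^sub>m S + of_real b \<cdot>\<^sub>m T) * (of_real a \<cdot>\<^sub>m S + of_real b \<cdot>\<^sub>m T)
    = of_real a \<cdot>\<^sub>m (of_real a \<cdot>\<^sub>m (S * S) + of_real b \<cdot>\<^sub>m (T * S)) +
      of_real b \<cdot>\<^sub>m (of_real a \<cdot>\<^sub>m (S * T) + of_real b \<cdot>\<^sub>m (T * T))"
    by (simp add: dsimps)
  show ?thesis
  proof (rule eq_matI)
    fix i j assume i: "i < dim_row (- (S * T))" and j: "j < dim_col (- (S * T))"
    then have i': "i < m" and j': "j < m" by auto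
    have "(of_real a \<cdot>\<^sub>m (of_real a \<cdot>\<^sub>m (S * S) + of_real b \<cdot>\<^sub>m (T * S)) +
      of_real b \<cdot>\<^sub>m (of_real a \<cdot>\<^sub>m (S * T) + of_real b \<cdot>\<^sub>m (T * T))) $$ (i,j)
       = 1\<^sub>m m $$ (i,j)" using MM exp by simp
    then have "of_real (a*a+b*b) * (1\<^sub>m m $$ (i,j)) + of_real (a*b) * ((S * T) $$ (i,j) + (T * S) $$ (i,j)) = 1\<^sub>m m $$ (i,j)"
      using i' j' unfolding SS TT by (simp del: index_mult_mat(1) add: algebra_simps)
    moreover have "a*a+b*b = 1" using ab by (simp add: power2_eq_square)
    ultimately have "of_real (a*b) * ((S * T) $$ (i,j) + (T * S) $$ (i,j)) = 0" by simp
    then have "(S * T) $$ (i,j) + (T * S) $$ (i,j) = 0" using ab by simp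
    then show "(T * S) $$ (i,j) = (- (S * T)) $$ (i,j)" using i' j' by (simp del: index_mult_mat(1) add: eq_neg_iff_add_eq_0 add.commute)
  qed (use S T in auto)
qed

lemma hu: "M \<in> herm m \<inter> unitary m \<Longrightarrow> M \<in> carrier_mat m m \<and> adj M = M \<and> M * M = 1\<^sub>m m"
  by (auto simp: herm_def unitary_def)

lemma drop0: "S \<in> carrier_mat m m \<Longrightarrow> T \<in> carrier_mat m m \<Longrightarrow> R \<in> carrier_mat m m \<Longrightarrow>
  of_real x \<cdot>\<^sub>m S + of_real y \<cdot>\<^sub>m T + of_real 0 \<cdot>\<^sub>m (R::complex mat) = of_real x \<cdot>\<^sub>m S + of_real y \<cdot>\<^sub>m T"
  "S \<in> carrier_mat m m \<Longrightarrow> T \<in> carrier_mat m m \<Longrightarrow> R \<in> carrier_mat m m \<Longrightarrow>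
  of_real x \<cdot>\<^sub>m S + of_real 0 \<cdot>\<^sub>m R + of_real y \<cdot>\<^sub>m (T::complex mat) = of_real x \<cdot>\<^sub>m S + of_real y \<cdot>\<^sub>m T"
  "S \<in> carrier_mat m m \<Longrightarrow> T \<in> carrier_mat m m \<Longrightarrow> R \<in> carrier_mat m m \<Longrightarrow>
  of_real 0 \<cdot>\<^sub>m R + of_real x \<cdot>\<^sub>m S + of_real y \<cdot>\<^sub>m (T::complex mat) = of_real x \<cdot>\<^sub>m S + of_real y \<cdot>\<^sub>m T"
  by (rule eq_matI; simp)+

lemma i_to_ii:
  assumes lin: "real_linear_on herm20 \<phi>" and uni: "\<forall>A\<in>iherm20. \<phi> A \<in> herm m \<inter> unitary m"
  shows "\<exists>p q :: nat. \<exists>U \<in> unitary m. m = 2 * (p + q) \<and>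
            (\<forall>A\<in>herm20. \<phi> A = U * dsum (kron A (1\<^sub>m p)) (kron (- A) (1\<^sub>m q)) * adj U)"
proof -
  define S1 where "S1 = \<phi> (pc 1 0 0)"
  define S2 where "S2 = \<phi> (pc 0 1 0)"
  define S3 where "S3 = \<phi> (pc 0 0 1)"
  have P1: "S1 \<in> carrier_mat m m \<and> adj S1 = S1 \<and> S1 * S1 = 1\<^sub>m m"
    unfolding S1_def by (rule hu) (use uni pc_iherm[of 1 0 0] in auto)
  have P2: "S2 \<in> carrier_mat m m \<and> adj S2 = S2 \<and> S2 * S2 = 1\<^sub>m m"
    unfolding S2_def by (rule hu) (use uni pc_iherm[of 0 1 0] in auto)
  have P3: "S3 \<in> carrier_mat m m \<and> adj S3 = S3 \<and> S3 * S3 = 1\<^sub>m m"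
    unfolding S3_def by (rule hu) (use uni pc_iherm[of 0 0 1] in auto)
  have c1: "S1 \<in> carrier_mat m m" and c2: "S2 \<in> carrier_mat m m" and c3: "S3 \<in> carrier_mat m m"
    using P1 P2 P3 by auto
  have phipc: "\<phi> (pc x y z) = of_real x \<cdot>\<^sub>m S1 + of_real y \<cdot>\<^sub>m S2 + of_real z \<cdot>\<^sub>m S3" for x y z
  proof -
    have e1: "pc x y 0 = of_real x \<cdot>\<^sub>m pc 1 0 0 + of_real y \<cdot>\<^sub>m pc 0 1 0"
      using pc_lin[of x 1 0 0 y 0 1 0] by simp
    have f1: "\<phi> (pc x y 0) = of_real x \<cdot>\<^sub>m S1 + of_real y \<cdot>\<^sub>m S2"
      unfolding e1 S1_def S2_def using lin pc_herm20 unfolding real_linear_on_def by blast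
    have e2: "pc x y z = of_real 1 \<cdot>\<^sub>m pc x y 0 + of_real z \<cdot>\<^sub>m pc 0 0 1"
      using pc_lin[of 1 x y 0 z 0 0 1] by simp
    have "\<phi> (pc x y z) = of_real 1 \<cdot>\<^sub>m \<phi> (pc x y 0) + of_real z \<cdot>\<^sub>m S3"
      unfolding S3_def by (subst e2) (use lin pc_herm20 in \<open>unfold real_linear_on_def, blast\<close>)
    then show ?thesis unfolding f1 by simp
  qed
  have ab: "(3/5::real)^2 + (4/5)^2 = 1" "(3/5::real) * (4/5) \<noteq> 0" by (simp_all add: power2_eq_square)
  have sq: "\<phi> (pc x y z) * \<phi> (pc x y z) = 1\<^sub>m m" if "x^2+y^2+z^2 = 1" for x y z
    using hu[of "\<phi> (pc x y z)" m] uni pc_iherm[OF that] by blast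
  have sq': "(of_real x \<cdot>\<^sub>m S1 + of_real y \<cdot>\<^sub>m S2 + of_real z \<cdot>\<^sub>m S3) * (of_real x \<cdot>\<^sub>m S1 + of_real y \<cdot>\<^sub>m S2 + of_real z \<cdot>\<^sub>m S3) = 1\<^sub>m m"
    if "x^2+y^2+z^2 = 1" for x y z
    using sq[OF that] unfolding phipc .
  have t1: "(3/5::real)^2+(4/5)^2+0^2 = 1" "(3/5::real)^2+0^2+(4/5)^2 = 1" "(0::real)^2+(3/5)^2+(4/5)^2 = 1"
    by (simp_all add: power2_eq_square)
  have m12: "(of_real (3/5) \<cdot>\<^sub>m S1 + of_real (4/5) \<cdot>\<^sub>m S2) * (of_real (3/5) \<cdot>\<^sub>m S1 + of_real (4/5) \<cdot>\<^sub>m S2) = 1\<^sub>m m"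
    using sq'[OF t1(1)] unfolding drop0(1)[OF c1 c2 c3] .
  have m13: "(of_real (3/5) \<cdot>\<^sub>m S1 + of_real (4/5) \<cdot>\<^sub>m S3) * (of_real (3/5) \<cdot>\<^sub>m S1 + of_real (4/5) \<cdot>\<^sub>m S3) = 1\<^sub>m m"
    using sq'[OF t1(2)] unfolding drop0(2)[OF c1 c3 c2] .
  have m23: "(of_real (3/5) \<cdot>\<^sub>m S2 + of_real (4/5) \<cdot>\<^sub>m S3) * (of_real (3/5) \<cdot>\<^sub>m S2 + of_real (4/5) \<cdot>\<^sub>m S3) = 1\<^sub>m m"
    using sq'[OF t1(3)] unfolding drop0(3)[OF c2 c3 c1] .
  have a12: "S2 * S1 = - (S1 * S2)"
    by (rule anti2[OF c1 c2 conjunct2[OF conjunct2[OF P1]] conjunct2[OF conjunct2[OF P2]] ab m12])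
  have a13: "S3 * S1 = - (S1 * S3)"
    by (rule anti2[OF c1 c3 conjunct2[OF conjunct2[OF P1]] conjunct2[OF conjunct2[OF P3]] ab m13])
  have a23: "S3 * S2 = - (S2 * S3)"
    by (rule anti2[OF c2 c3 conjunct2[OF conjunct2[OF P2]] conjunct2[OF conjunct2[OF P3]] ab m23])
  interpret cliff m S1 S2 S3
    by unfold_locales (use P1 P2 P3 a12 a13 a23 in auto)
  obtain p V1 where V1: "V1 \<in> carrier_mat m p" "adj V1 * V1 = 1\<^sub>m p" "V1 * adj V1 = E1"
    using proj_decomp[OF E1c E1h E1i] by blast
  obtain q V2 where V2: "V2 \<in> carrier_mat m q" "adj V2 * V2 = 1\<^sub>m q" "V2 * adj V2 = E2"
    using proj_decomp[OF E2c E2h E2i] by blast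
  define U where "U = cc (cc V1 (S1 * V1)) (cc V2 (- (S1 * V2)))"
  have Uc: "U \<in> carrier_mat m (p + p + (q + q))" and UU: "adj U * U = 1\<^sub>m (p + p + (q + q))"
    and UU': "U * adj U = 1\<^sub>m m"
    using construct[OF V1 V2] unfolding U_def by auto
  have "of_nat m = (of_nat (p + p + (q + q)) :: complex)"
    using mtrace_comm[OF Uc adj_carrier[OF Uc]] UU UU' by simp
  then have mn: "m = p + p + (q + q)" by (simp only: of_nat_eq_iff)
  have Uu: "U \<in> unitary m" using Uc UU UU' mn by (simp add: unitary_def)
  have rep: "\<phi> A = U * dsum (kron A (1\<^sub>m p)) (kron (- A) (1\<^sub>m q)) * adj U" if A: "A \<in> herm20" for A
  proof -
    obtain x y z where Ax: "A = pc x y z" using herm20_pc[OF A] by blast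
    define M where "M = of_real x \<cdot>\<^sub>m S1 + of_real y \<cdot>\<^sub>m S2 + of_real z \<cdot>\<^sub>m S3"
    have Mc: "M \<in> carrier_mat m m" unfolding M_def using c1 c2 c3 by simp
    have MU: "M * U = U * DD p q A"
      unfolding M_def U_def Ax by (rule construct_rep[OF V1 V2])
    have m2: "2*p + 2*q = m" using mn by simp
    have Dc: "DD p q A \<in> carrier_mat m m" using DD_carrier[of A p q, unfolded m2] Ax by simp
    have "\<phi> A = M * (U * adj U)" using Mc UU' by (simp add: Ax phipc M_def)
    also have "\<dots> = (M * U) * adj U" using Mc Uc mn by (simp add: dassoc)
    also have "\<dots> = U * DD p q A * adj U" unfolding MU ..
    finally show ?thesis by (simp add: DD_def)
  qed
  show ?thesis
    by (rule exI[of _ p], rule exI[of _ q], rule bexI[OF _ Uu]) (use mn rep in auto)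
qed

theorem corollary3p5:
  fixes m :: nat and \<phi> :: "complex mat \<Rightarrow> complex mat"
  assumes "m \<ge> 1"
    and "\<forall>A\<in>herm20. \<phi> A \<in> herm m"
  shows "(real_linear_on herm20 \<phi> \<and> (\<forall>A\<in>iherm20. \<phi> A \<in> herm m \<inter> unitary m))
     \<longleftrightarrow> (\<exists>p q :: nat. \<exists>U \<in> unitary m. m = 2 * (p + q) \<and>
            (\<forall>A\<in>herm20. \<phi> A = U * dsum (kron A (1\<^sub>m p)) (kron (- A) (1\<^sub>m q)) * adj U))"
proof
  assume "real_linear_on herm20 \<phi> \<and> (\<forall>A\<in>iherm20. \<phi> A \<in> herm m \<inter> unitary m)"
  then show "\<exists>p q :: nat. \<exists>U \<in> unitary m. m = 2 * (p + q) \<and>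
            (\<forall>A\<in>herm20. \<phi> A = U * dsum (kron A (1\<^sub>m p)) (kron (- A) (1\<^sub>m q)) * adj U)"
    using i_to_ii by blast
next
  assume "\<exists>p q :: nat. \<exists>U \<in> unitary m. m = 2 * (p + q) \<and>
            (\<forall>A\<in>herm20. \<phi> A = U * dsum (kron A (1\<^sub>m p)) (kron (- A) (1\<^sub>m q)) * adj U)"
  then obtain p q U where "U \<in> unitary m" "m = 2 * (p + q)"
    "\<forall>A\<in>herm20. \<phi> A = U * dsum (kron A (1\<^sub>m p)) (kron (- A) (1\<^sub>m q)) * adj U" by blast
  then show "real_linear_on herm20 \<phi> \<and> (\<forall>A\<in>iherm20. \<phi> A \<in> herm m \<inter> unitary m)"
    using ii_to_i[OF assms(2)] by blast
qed

end
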